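(* The following statements are equivalent: (1) For all $k>1$, every infinite word on the alphabet $\{1,2,\dots,k\}$ has two adjacent factors with equal length and equal sum. (1a) For all $k>1$, there exists $R=R(k)$ such that every word on $\{1,2,\dots,k\}$ of length $R$ has two adjacent factors with equal length and equal sum. (2) For all $n>1$, if $x_1<x_2<x_3<\cdots$ is an infinite sequence of positive integers with $x_{i+1}-x_i\le n$ for all $i\ge1$, then there exist $1\le i<j<k$ with $x_i+x_k=2x_j$ and $i+k=2j$. (2a) For all $n>1$, there exists $S=S(n)$ such that if $x_1<x_2<\cdots<x_S$ are positive integers with $x_{i+1}-x_i\le n$ for $1\le i\le S-1$, then there exist $1\le i<j<k\le S$ with $x_i+x_k=2x_j$ and $i+k=2j$. (3) For all $t>1$, if $\mathbb{N}=A_1\cup A_2\cup\cdots\cup A_t$ (the sets $A_q$ not necessarily disjoint), then there exists $q$, $1\le q\le t$, such that, writing $A_q=\{x_1<x_2<\cdots\}$, there are $1\le i<j<k$ with $x_i+x_k=2x_j$ and $i+k=2j$. (3a) For all $t>1$, there exists $T=T(t)$ such that for all $a\ge1$, if $\{a,a+1,\dots,a+T-1\}=A_1\cup\cdots\cup A_t$ (the sets not necessarily disjoint), then there exists $q$, $1\le q\le t$, such that, writing $A_q=\{x_1<x_2<\cdots<x_p\}$, there are $1\le i<j<k\le p$ with $x_i+x_k=2x_j$ and $i+k=2j$.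
   Context: A word on a finite alphabet $S\subset\mathbb{Z}$ is a (finite or infinite) sequence $x_1x_2\cdots$ of elements of $S$. A factor of length $\ell$ is a block $x_mx_{m+1}\cdots x_{m+\ell-1}$ of consecutive letters, and its sum is $x_m+\cdots+x_{m+\ell-1}$. Two factors are adjacent if the second begins immediately after the first ends. *)

theory Defs
  imports Main
begin

definition has_adj_eq_sum :: "(nat \<Rightarrow> nat) \<Rightarrow> bool" where
  "has_adj_eq_sum w \<longleftrightarrow> (\<exists>m l. l \<ge> 1 \<and>
      (\<Sum>i\<in>{m..<m+l}. w i) = (\<Sum>i\<in>{m+l..<m+2*l}. w i))"

definition list_has_adj_eq_sum :: "nat list \<Rightarrow> bool" where
  "list_has_adj_eq_sum xs \<longleftrightarrow> (\<exists>m l. l \<ge> 1 \<and> m + 2*l \<le> length xs \<and>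
      (\<Sum>i\<in>{m..<m+l}. xs ! i) = (\<Sum>i\<in>{m+l..<m+2*l}. xs ! i))"

text \<open>Position of an element x in the increasing enumeration of a set A of naturals
  (0-based: the number of elements of A below x).\<close>
definition rank :: "nat set \<Rightarrow> nat \<Rightarrow> nat" where
  "rank A x = card {y \<in> A. y < x}"

definition has_index_ap :: "nat set \<Rightarrow> bool" where
  "has_index_ap A \<longleftrightarrow> (\<exists>a b c. a \<in> A \<and> b \<in> A \<and> c \<in> A \<and> a < b \<and> b < c \<and>
      a + c = 2*b \<and> rank A a + rank A c = 2 * rank A b)"

definition stmt1 :: bool where
  "stmt1 \<longleftrightarrow> (\<forall>k::nat. k > 1 \<longrightarrow>
     (\<forall>w::nat \<Rightarrow> nat. (\<forall>i. w i \<in> {1..k}) \<longrightarrow> has_adj_eq_sum w))"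

definition stmt1a :: bool where
  "stmt1a \<longleftrightarrow> (\<forall>k::nat. k > 1 \<longrightarrow> (\<exists>R::nat.
     \<forall>xs::nat list. length xs = R \<and> set xs \<subseteq> {1..k} \<longrightarrow> list_has_adj_eq_sum xs))"

definition stmt2 :: bool where
  "stmt2 \<longleftrightarrow> (\<forall>n::nat. n > 1 \<longrightarrow> (\<forall>x::nat \<Rightarrow> nat.
     (\<forall>i\<ge>1. 0 < x i \<and> x i < x (i+1) \<and> x (i+1) - x i \<le> n) \<longrightarrow>
     (\<exists>i j k. 1 \<le> i \<and> i < j \<and> j < k \<and> x i + x k = 2 * x j \<and> i + k = 2 * j)))"

definition stmt2a :: bool where
  "stmt2a \<longleftrightarrow> (\<forall>n::nat. n > 1 \<longrightarrow> (\<exists>S::nat. \<forall>x::nat \<Rightarrow> nat.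
     (\<forall>i. 1 \<le> i \<and> i \<le> S \<longrightarrow> 0 < x i) \<and>
     (\<forall>i. 1 \<le> i \<and> i \<le> S - 1 \<longrightarrow> x i < x (i+1) \<and> x (i+1) - x i \<le> n) \<longrightarrow>
     (\<exists>i j k. 1 \<le> i \<and> i < j \<and> j < k \<and> k \<le> S \<and> x i + x k = 2 * x j \<and> i + k = 2 * j)))"

definition stmt3 :: bool where
  "stmt3 \<longleftrightarrow> (\<forall>t::nat. t > 1 \<longrightarrow> (\<forall>A::nat \<Rightarrow> nat set.
     (\<Union>q\<in>{1..t}. A q) = {1..} \<longrightarrow> (\<exists>q\<in>{1..t}. has_index_ap (A q))))"

definition stmt3a :: bool where
  "stmt3a \<longleftrightarrow> (\<forall>t::nat. t > 1 \<longrightarrow> (\<exists>T::nat. \<forall>a::nat. a \<ge> 1 \<longrightarrow>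
     (\<forall>A::nat \<Rightarrow> nat set. (\<Union>q\<in>{1..t}. A q) = {a..<a+T} \<longrightarrow>
        (\<exists>q\<in>{1..t}. has_index_ap (A q)))))"

end

theory Submission
  imports Defs
begin


lemma tele:
  fixes x :: "nat \<Rightarrow> nat"
  assumes "\<And>p. m \<le> p \<Longrightarrow> p < m + l \<Longrightarrow> x p \<le> x (Suc p)"
  shows "x m \<le> x (m+l) \<and> (\<Sum>p\<in>{m..<m+l}. x (Suc p) - x p) = x (m+l) - x m"
  using assms
proof (induction l)
  case 0
  then show ?case by simp
next
  case (Suc l)
  have IH: "x m \<le> x (m+l) \<and> (\<Sum>p\<in>{m..<m+l}. x (Suc p) - x p) = x (m+l) - x m"
    using Suc.IH Suc.prems by simp
  have "x (m+l) \<le> x (Suc (m+l))" using Suc.prems by simp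
  then show ?case using IH by simp
qed

lemma seg:
  fixes w :: "nat \<Rightarrow> nat"
  assumes "1 \<le> i" "i \<le> j"
  shows "1 + sum w {0..<j-1} = (1 + sum w {0..<i-1}) + sum w {i-1..<j-1}"
  using sum.atLeastLessThan_concat[of 0 "i-1" "j-1" w] assms by simp

lemma s2_s1: assumes "stmt2" shows "stmt1"
  unfolding stmt1_def
proof (intro allI impI)
  fix k :: nat and w :: "nat \<Rightarrow> nat"
  assume k: "k > 1" and w: "\<forall>i. w i \<in> {1..k}"
  define x where "x = (\<lambda>i. 1 + sum w {0..<i-1})"
  have diff: "x (i+1) = x i + w (i-1)" if "1 \<le> i" for i
  proof -
    have "{0..<i} = {0..<Suc (i-1)}" using that by simp
    then show ?thesis unfolding x_def by simp
  qed
  have cond: "\<forall>i\<ge>1. 0 < x i \<and> x i < x (i+1) \<and> x (i+1) - x i \<le> k"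
  proof (intro allI impI)
    fix i :: nat assume "1 \<le> i"
    then show "0 < x i \<and> x i < x (i+1) \<and> x (i+1) - x i \<le> k"
      using diff[of i] w unfolding x_def by (auto simp: Suc_le_eq)
  qed
  obtain i j kk where ijk: "1 \<le> i" "i < j" "j < kk" "x i + x kk = 2 * x j" "i + kk = 2 * j"
    using assms k cond unfolding stmt2_def by blast
  have s1: "x j = x i + sum w {i-1..<j-1}" using seg[of i j w] ijk unfolding x_def by simp
  have s2: "x kk = x j + sum w {j-1..<kk-1}" using seg[of j kk w] ijk unfolding x_def by simp
  have eq: "sum w {i-1..<j-1} = sum w {j-1..<kk-1}" using s1 s2 ijk(4) by simp
  show "has_adj_eq_sum w" unfolding has_adj_eq_sum_def
  proof (intro exI conjI)
    show "1 \<le> j - i" using ijk by simp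
    have a: "i - 1 + (j - i) = j - 1" using ijk by simp
    have b: "i - 1 + 2 * (j - i) = kk - 1" using ijk by simp
    show "(\<Sum>p\<in>{i-1..<i-1+(j-i)}. w p) = (\<Sum>p\<in>{i-1+(j-i)..<i-1+2*(j-i)}. w p)"
      unfolding a b using eq by simp
  qed
qed

lemma s1_s2: assumes "stmt1" shows "stmt2"
  unfolding stmt2_def
proof (intro allI impI)
  fix n :: nat and x :: "nat \<Rightarrow> nat"
  assume n: "n > 1" and H: "\<forall>i\<ge>1. 0 < x i \<and> x i < x (i+1) \<and> x (i+1) - x i \<le> n"
  define w where "w = (\<lambda>p. x (p+2) - x (p+1))"
  have wr: "\<forall>p. w p \<in> {1..n}"
  proof
    fix p have "0 < x (p+1) \<and> x (p+1) < x (p+1+1) \<and> x (p+1+1) - x (p+1) \<le> n" using H by simp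
    then show "w p \<in> {1..n}" unfolding w_def by (simp add: numeral_2_eq_2 Suc_le_eq)
  qed
  obtain m l where ml: "l \<ge> 1" "(\<Sum>i\<in>{m..<m+l}. w i) = (\<Sum>i\<in>{m+l..<m+2*l}. w i)"
    using assms n wr unfolding stmt1_def has_adj_eq_sum_def by blast
  define y where "y = (\<lambda>p. x (Suc p))"
  have ymono: "y p \<le> y (Suc p)" for p using H[rule_format, of "Suc p"] unfolding y_def by simp
  have wy: "w = (\<lambda>p. y (Suc p) - y p)" unfolding w_def y_def by (simp add: numeral_2_eq_2)
  have t1: "y m \<le> y (m+l) \<and> (\<Sum>p\<in>{m..<m+l}. y (Suc p) - y p) = y (m+l) - y m"
    by (rule tele) (simp add: ymono)
  have t2: "y (m+l) \<le> y (m+l+l) \<and> (\<Sum>p\<in>{m+l..<m+l+l}. y (Suc p) - y p) = y (m+l+l) - y (m+l)"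
    by (rule tele) (simp add: ymono)
  have e: "m + 2*l = m+l+l" by simp
  have "y (m+l) - y m = y (m+l+l) - y (m+l)" using ml(2) t1 t2 unfolding wy e by simp
  moreover have "y m \<le> y (m+l)" "y (m+l) \<le> y (m+l+l)" using t1 t2 by auto
  ultimately have "y m + y (m+l+l) = 2 * y (m+l)" by linarith
  then show "\<exists>i j k. 1 \<le> i \<and> i < j \<and> j < k \<and> x i + x k = 2 * x j \<and> i + k = 2 * j"
    using ml(1) unfolding y_def
    by (intro exI[of _ "Suc m"] exI[of _ "Suc (m+l)"] exI[of _ "Suc (m+l+l)"]) auto
qed



lemma s2a_s1a: assumes "stmt2a" shows "stmt1a"
  unfolding stmt1a_def
proof (intro allI impI)
  fix k :: nat assume k: "k > 1"
  obtain S where S: "\<forall>x::nat \<Rightarrow> nat.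
     (\<forall>i. 1 \<le> i \<and> i \<le> S \<longrightarrow> 0 < x i) \<and>
     (\<forall>i. 1 \<le> i \<and> i \<le> S - 1 \<longrightarrow> x i < x (i+1) \<and> x (i+1) - x i \<le> k) \<longrightarrow>
     (\<exists>i j kk. 1 \<le> i \<and> i < j \<and> j < kk \<and> kk \<le> S \<and> x i + x kk = 2 * x j \<and> i + kk = 2 * j)"
    using assms k unfolding stmt2a_def by blast
  show "\<exists>R. \<forall>xs. length xs = R \<and> set xs \<subseteq> {1..k} \<longrightarrow> list_has_adj_eq_sum xs"
  proof (intro exI allI impI)
    fix xs :: "nat list" assume xs: "length xs = S - 1 \<and> set xs \<subseteq> {1..k}"
    define w where "w = (\<lambda>p. xs ! p)"
    define x where "x = (\<lambda>i. 1 + sum w {0..<i-1})"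
    have diff: "x (i+1) = x i + w (i-1)" if "1 \<le> i" for i
    proof -
      have "{0..<i} = {0..<Suc (i-1)}" using that by simp
      then show ?thesis unfolding x_def by simp
    qed
    have c1: "\<forall>i. 1 \<le> i \<and> i \<le> S \<longrightarrow> 0 < x i" unfolding x_def by simp
    have c2: "\<forall>i. 1 \<le> i \<and> i \<le> S - 1 \<longrightarrow> x i < x (i+1) \<and> x (i+1) - x i \<le> k"
    proof (intro allI impI)
      fix i assume i: "1 \<le> i \<and> i \<le> S - 1"
      then have "i - 1 < length xs" using xs by arith
      then have "w (i-1) \<in> {1..k}" using xs nth_mem unfolding w_def by blast
      then show "x i < x (i+1) \<and> x (i+1) - x i \<le> k" using diff[of i] i by auto
    qed
    obtain i j kk where ijk: "1 \<le> i" "i < j" "j < kk" "kk \<le> S" "x i + x kk = 2 * x j" "i + kk = 2 * j"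
      using S c1 c2 by blast
    have s1: "x j = x i + sum w {i-1..<j-1}" using seg[of i j w] ijk unfolding x_def by simp
    have s2: "x kk = x j + sum w {j-1..<kk-1}" using seg[of j kk w] ijk unfolding x_def by simp
    have eq: "sum w {i-1..<j-1} = sum w {j-1..<kk-1}" using s1 s2 ijk(5) by simp
    show "list_has_adj_eq_sum xs" unfolding list_has_adj_eq_sum_def
    proof (intro exI conjI)
      show "1 \<le> j - i" using ijk by simp
      have a: "i - 1 + (j - i) = j - 1" using ijk by simp
      have b: "i - 1 + 2 * (j - i) = kk - 1" using ijk by simp
      show "i - 1 + 2 * (j - i) \<le> length xs" unfolding b using xs ijk by simp
      show "(\<Sum>p\<in>{i-1..<i-1+(j-i)}. xs ! p) = (\<Sum>p\<in>{i-1+(j-i)..<i-1+2*(j-i)}. xs ! p)"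
        unfolding a b using eq unfolding w_def by simp
    qed
  qed
qed

lemma s1a_s2a: assumes "stmt1a" shows "stmt2a"
  unfolding stmt2a_def
proof (intro allI impI)
  fix n :: nat assume n: "n > 1"
  obtain R where R: "\<forall>xs::nat list. length xs = R \<and> set xs \<subseteq> {1..n} \<longrightarrow> list_has_adj_eq_sum xs"
    using assms n unfolding stmt1a_def by blast
  show "\<exists>S. \<forall>x::nat \<Rightarrow> nat.
     (\<forall>i. 1 \<le> i \<and> i \<le> S \<longrightarrow> 0 < x i) \<and>
     (\<forall>i. 1 \<le> i \<and> i \<le> S - 1 \<longrightarrow> x i < x (i+1) \<and> x (i+1) - x i \<le> n) \<longrightarrow>
     (\<exists>i j k. 1 \<le> i \<and> i < j \<and> j < k \<and> k \<le> S \<and> x i + x k = 2 * x j \<and> i + k = 2 * j)"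
  proof -
  have "\<forall>x::nat \<Rightarrow> nat. (\<forall>i. 1 \<le> i \<and> i \<le> R+1 \<longrightarrow> 0 < x i) \<and>
     (\<forall>i. 1 \<le> i \<and> i \<le> R+1 - 1 \<longrightarrow> x i < x (i+1) \<and> x (i+1) - x i \<le> n) \<longrightarrow>
     (\<exists>i j k. 1 \<le> i \<and> i < j \<and> j < k \<and> k \<le> R+1 \<and> x i + x k = 2 * x j \<and> i + k = 2 * j)"
  proof (intro allI impI)
    fix x :: "nat \<Rightarrow> nat"
    assume "(\<forall>i. 1 \<le> i \<and> i \<le> R+1 \<longrightarrow> 0 < x i) \<and>
     (\<forall>i. 1 \<le> i \<and> i \<le> R+1 - 1 \<longrightarrow> x i < x (i+1) \<and> x (i+1) - x i \<le> n)"
    then have H: "\<And>i. 1 \<le> i \<Longrightarrow> i \<le> R \<Longrightarrow> x i < x (i+1) \<and> x (i+1) - x i \<le> n" by simp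
    define w where "w = (\<lambda>p. x (p+2) - x (p+1))"
    define xs where "xs = map w [0..<R]"
    have lxs: "length xs = R" unfolding xs_def by simp
    have sxs: "set xs \<subseteq> {1..n}"
    proof
      fix v assume "v \<in> set xs"
      then obtain p where p: "p < R" "v = w p" unfolding xs_def by auto
      have "x (p+1) < x (p+1+1) \<and> x (p+1+1) - x (p+1) \<le> n" using H[of "p+1"] p by simp
      then show "v \<in> {1..n}" using p unfolding w_def by (simp add: numeral_2_eq_2 Suc_le_eq)
    qed
    obtain m l where ml: "l \<ge> 1" "m + 2*l \<le> R" "(\<Sum>i\<in>{m..<m+l}. xs ! i) = (\<Sum>i\<in>{m+l..<m+2*l}. xs ! i)"
      using R lxs sxs unfolding list_has_adj_eq_sum_def by blast
    have ml2: "(\<Sum>i\<in>{m..<m+l}. w i) = (\<Sum>i\<in>{m+l..<m+2*l}. w i)"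
    proof -
      have "(\<Sum>i\<in>{m..<m+l}. xs ! i) = (\<Sum>i\<in>{m..<m+l}. w i)"
        by (rule sum.cong) (use ml in \<open>auto simp: xs_def\<close>)
      moreover have "(\<Sum>i\<in>{m+l..<m+2*l}. xs ! i) = (\<Sum>i\<in>{m+l..<m+2*l}. w i)"
        by (rule sum.cong) (use ml in \<open>auto simp: xs_def\<close>)
      ultimately show ?thesis using ml(3) by simp
    qed
    define y where "y = (\<lambda>p. x (Suc p))"
    have ymono: "y p \<le> y (Suc p)" if "p < R" for p using H[of "Suc p"] that unfolding y_def by simp
    have wy: "w = (\<lambda>p. y (Suc p) - y p)" unfolding w_def y_def by (simp add: numeral_2_eq_2)
    have t1: "y m \<le> y (m+l) \<and> (\<Sum>p\<in>{m..<m+l}. y (Suc p) - y p) = y (m+l) - y m"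
      by (rule tele) (use ml in \<open>simp add: ymono\<close>)
    have t2: "y (m+l) \<le> y (m+l+l) \<and> (\<Sum>p\<in>{m+l..<m+l+l}. y (Suc p) - y p) = y (m+l+l) - y (m+l)"
      by (rule tele) (use ml in \<open>simp add: ymono\<close>)
    have e: "m + 2*l = m+l+l" by simp
    have "y (m+l) - y m = y (m+l+l) - y (m+l)" using ml2 t1 t2 unfolding wy e by simp
    moreover have "y m \<le> y (m+l)" "y (m+l) \<le> y (m+l+l)" using t1 t2 by auto
    ultimately have "y m + y (m+l+l) = 2 * y (m+l)" by linarith
    then show "\<exists>i j k. 1 \<le> i \<and> i < j \<and> j < k \<and> k \<le> R+1 \<and> x i + x k = 2 * x j \<and> i + k = 2 * j"
      using ml(1,2) unfolding y_def
      by (intro exI[of _ "Suc m"] exI[of _ "Suc (m+l)"] exI[of _ "Suc (m+l+l)"]) auto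
  qed
  then show ?thesis by blast
  qed
qed



lemma s1a_s1: assumes "stmt1a" shows "stmt1"
  unfolding stmt1_def
proof (intro allI impI)
  fix k :: nat and w :: "nat \<Rightarrow> nat"
  assume k: "k > 1" and w: "\<forall>i. w i \<in> {1..k}"
  obtain R where R: "\<forall>xs::nat list. length xs = R \<and> set xs \<subseteq> {1..k} \<longrightarrow> list_has_adj_eq_sum xs"
    using assms k unfolding stmt1a_def by blast
  have "set (map w [0..<R]) \<subseteq> {1..k}" using w by auto
  then have "list_has_adj_eq_sum (map w [0..<R])" using R by simp
  then obtain m l where ml: "l \<ge> 1" "m + 2*l \<le> R"
    "(\<Sum>i\<in>{m..<m+l}. map w [0..<R] ! i) = (\<Sum>i\<in>{m+l..<m+2*l}. map w [0..<R] ! i)"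
    unfolding list_has_adj_eq_sum_def by auto
  have a: "(\<Sum>i\<in>{m..<m+l}. map w [0..<R] ! i) = (\<Sum>i\<in>{m..<m+l}. w i)"
    by (rule sum.cong) (use ml in auto)
  have b: "(\<Sum>i\<in>{m+l..<m+2*l}. map w [0..<R] ! i) = (\<Sum>i\<in>{m+l..<m+2*l}. w i)"
    by (rule sum.cong) (use ml in auto)
  show "has_adj_eq_sum w" unfolding has_adj_eq_sum_def using ml a b by metis
qed

definition bad :: "nat \<Rightarrow> nat list \<Rightarrow> bool" where
  "bad k xs \<longleftrightarrow> set xs \<subseteq> {1..k} \<and> \<not> list_has_adj_eq_sum xs"

definition ext :: "nat \<Rightarrow> nat list \<Rightarrow> bool" where
  "ext k xs \<longleftrightarrow> (\<forall>R. \<exists>ys. length ys = R \<and> bad k (xs @ ys))"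

lemma bad_prefix: "bad k (xs @ ys) \<Longrightarrow> bad k xs"
proof -
  assume h: "bad k (xs @ ys)"
  have "\<not> list_has_adj_eq_sum xs"
  proof
    assume "list_has_adj_eq_sum xs"
    then obtain m l where ml: "l \<ge> 1" "m + 2*l \<le> length xs"
      "(\<Sum>i\<in>{m..<m+l}. xs ! i) = (\<Sum>i\<in>{m+l..<m+2*l}. xs ! i)"
      unfolding list_has_adj_eq_sum_def by auto
    have a: "(\<Sum>i\<in>{m..<m+l}. (xs@ys) ! i) = (\<Sum>i\<in>{m..<m+l}. xs ! i)"
      by (rule sum.cong) (use ml in \<open>auto simp: nth_append\<close>)
    have b: "(\<Sum>i\<in>{m+l..<m+2*l}. (xs@ys) ! i) = (\<Sum>i\<in>{m+l..<m+2*l}. xs ! i)"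
      by (rule sum.cong) (use ml in \<open>auto simp: nth_append\<close>)
    have "list_has_adj_eq_sum (xs @ ys)" unfolding list_has_adj_eq_sum_def
      using ml a b by (intro exI[of _ m] exI[of _ l]) auto
    then show False using h unfolding bad_def by simp
  qed
  then show "bad k xs" using h unfolding bad_def by auto
qed

lemma ext_step:
  assumes "ext k xs"
  shows "\<exists>c\<in>{1..k}. ext k (xs @ [c])"
proof (rule ccontr)
  assume "\<not> ?thesis"
  then have "\<forall>c\<in>{1..k}. \<exists>R. \<forall>ys. length ys = R \<longrightarrow> \<not> bad k (xs @ [c] @ ys)"
    unfolding ext_def by auto
  then obtain f where f: "\<forall>c\<in>{1..k}. \<forall>ys. length ys = f c \<longrightarrow> \<not> bad k (xs @ [c] @ ys)"
    by metis
  define M where "M = Max (f ` {1..k})"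
  obtain ys where ys: "length ys = Suc M" "bad k (xs @ ys)" using assms unfolding ext_def by blast
  obtain c ys' where cy: "ys = c # ys'" using ys(1) by (cases ys) auto
  have "c \<in> set (xs @ ys)" using cy by simp
  then have c: "c \<in> {1..k}" using ys(2) unfolding bad_def by auto
  have "f c \<le> M" unfolding M_def using c by (intro Max_ge) auto
  then have "f c \<le> length ys'" using ys(1) cy by simp
  have "bad k ((xs @ [c] @ take (f c) ys') @ drop (f c) ys')" using ys(2) cy by simp
  then have "bad k (xs @ [c] @ take (f c) ys')" by (rule bad_prefix)
  moreover have "length (take (f c) ys') = f c" using \<open>f c \<le> length ys'\<close> by simp
  ultimately show False using f c by blast
qed

lemma s1_s1a: assumes "stmt1" shows "stmt1a"
proof (rule ccontr)
  assume "\<not> stmt1a"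
  then obtain k :: nat where k: "k > 1"
    and nb: "\<forall>R. \<exists>xs. length xs = R \<and> set xs \<subseteq> {1..k} \<and> \<not> list_has_adj_eq_sum xs"
    unfolding stmt1a_def by blast
  have e0: "ext k []" using nb unfolding ext_def bad_def by simp
  define nxt where "nxt = (\<lambda>xs. xs @ [SOME c. c \<in> {1..k} \<and> ext k (xs @ [c])])"
  define pre where "pre = (\<lambda>n. (nxt ^^ n) [])"
  have pre_suc: "pre (Suc n) = nxt (pre n)" for n unfolding pre_def by simp
  have ep: "ext k (pre n) \<and> length (pre n) = n" for n
  proof (induction n)
    case 0 then show ?case using e0 unfolding pre_def by simp
  next
    case (Suc n)
    then obtain c where "c \<in> {1..k} \<and> ext k (pre n @ [c])" using ext_step by blast
    then have "(SOME c. c \<in> {1..k} \<and> ext k (pre n @ [c])) \<in> {1..k} \<and>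
       ext k (pre n @ [SOME c. c \<in> {1..k} \<and> ext k (pre n @ [c])])" by (rule someI)
    then show ?case using Suc pre_suc unfolding nxt_def by simp
  qed
  define w where "w = (\<lambda>p. pre (Suc p) ! p)"
  have pw: "pre n = map w [0..<n]" for n
  proof (induction n)
    case 0 then show ?case unfolding pre_def by simp
  next
    case (Suc n)
    have "pre (Suc n) = pre n @ [pre (Suc n) ! n]"
      using pre_suc[of n] ep[of n] unfolding nxt_def by (simp add: nth_append)
    then show ?case using Suc unfolding w_def by simp
  qed
  have badp: "bad k (pre n)" for n using ep[of n] bad_prefix[of k "pre n"] unfolding ext_def by fastforce
  have wr: "\<forall>i. w i \<in> {1..k}"
  proof
    fix i
    have "w i \<in> set (pre (Suc i))" unfolding pw by simp
    then show "w i \<in> {1..k}" using badp[of "Suc i"] unfolding bad_def by auto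
  qed
  obtain m l where ml: "l \<ge> 1" "(\<Sum>i\<in>{m..<m+l}. w i) = (\<Sum>i\<in>{m+l..<m+2*l}. w i)"
    using assms k wr unfolding stmt1_def has_adj_eq_sum_def by blast
  define R where "R = m + 2*l"
  have a: "(\<Sum>i\<in>{m..<m+l}. map w [0..<R] ! i) = (\<Sum>i\<in>{m..<m+l}. w i)"
    by (rule sum.cong) (auto simp: R_def)
  have b: "(\<Sum>i\<in>{m+l..<m+2*l}. map w [0..<R] ! i) = (\<Sum>i\<in>{m+l..<m+2*l}. w i)"
    by (rule sum.cong) (auto simp: R_def)
  have "list_has_adj_eq_sum (pre R)" unfolding pw list_has_adj_eq_sum_def
    using ml a b by (intro exI[of _ m] exI[of _ l]) (auto simp: R_def)
  then show False using badp[of R] unfolding bad_def by simp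
qed



lemma smono:
  fixes x :: "nat \<Rightarrow> nat"
  assumes "\<And>i. 1 \<le> i \<Longrightarrow> x i < x (Suc i)" "1 \<le> i" "i < j"
  shows "x i < x j"
  using assms(3)
proof (induction j)
  case 0 then show ?case by simp
next
  case (Suc j)
  then show ?case
  proof (cases "i = j")
    case True then show ?thesis using assms(1,2) by simp
  next
    case False
    then have "x i < x j" using Suc by simp
    moreover have "x j < x (Suc j)" using assms(1)[of j] assms(2) False Suc.prems by simp
    ultimately show ?thesis by simp
  qed
qed

lemma rank_img:
  fixes f :: "nat \<Rightarrow> nat"
  assumes sm: "\<And>l i. 1 \<le> l \<Longrightarrow> l < i \<Longrightarrow> f l < f i" and i: "1 \<le> i"
  shows "rank (f ` {1..}) (f i) = i - 1"
proof -
  have mono_iff: "f l < f i \<longleftrightarrow> l < i" if "1 \<le> l" for l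
    using sm[of l i] sm[of i l] that i by (metis less_asym' linorder_neqE_nat)
  have "{y \<in> f ` {1..}. y < f i} = f ` {1..<i}"
    using mono_iff by auto
  moreover have "inj_on f {1..<i}"
  proof (rule inj_onI)
    fix a b assume "a \<in> {1..<i}" "b \<in> {1..<i}" "f a = f b"
    then show "a = b" using sm[of a b] sm[of b a] by (cases "a < b") (auto simp: not_less_iff_gr_or_eq)
  qed
  ultimately show ?thesis unfolding rank_def by (simp add: card_image)
qed

lemma s3_s2: assumes "stmt3" shows "stmt2"
  unfolding stmt2_def
proof (intro allI impI)
  fix n :: nat and x :: "nat \<Rightarrow> nat"
  assume n: "n > 1" and H: "\<forall>i\<ge>1. 0 < x i \<and> x i < x (i+1) \<and> x (i+1) - x i \<le> n"
  have xs: "\<And>i. 1 \<le> i \<Longrightarrow> x i < x (Suc i)" using H by simp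
  have xm: "x i < x j" if "1 \<le> i" "i < j" for i j by (rule smono[of x, OF xs that])
  have xge: "x 1 \<le> x i" if "1 \<le> i" for i using xm[of 1 i] that by (cases "i = 1") auto
  have xgrow: "x 1 + (i - 1) \<le> x i" if "1 \<le> i" for i
    using that
  proof (induction i rule: dec_induct)
    case base then show ?case by simp
  next
    case (step i) then show ?case using xs[of i] by simp
  qed
  define f where "f = (\<lambda>q i. x i - x 1 + q)"
  define A where "A = (\<lambda>q. f q ` {1..})"
  have fsm: "f q l < f q i" if "1 \<le> l" "l < i" for q l i
    using xm[OF that] xge[of l] xge[of i] that unfolding f_def by simp
  have cover: "(\<Union>q\<in>{1..n}. A q) = {1..}"
  proof
    show "(\<Union>q\<in>{1..n}. A q) \<subseteq> {1..}" unfolding A_def f_def by auto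
    show "{1..} \<subseteq> (\<Union>q\<in>{1..n}. A q)"
    proof
      fix m :: nat assume m: "m \<in> {1..}"
      define P where "P = (\<lambda>j. 1 \<le> j \<and> m < x j - x 1 + 1)"
      have Pm: "P (m+1)" using xgrow[of "m+1"] unfolding P_def by simp
      define j where "j = (LEAST j. P j)"
      have Pj: "P j" unfolding j_def using Pm by (rule LeastI)
      have j2: "j \<ge> 2" using Pj m unfolding P_def by (cases "j = 1") auto
      define i where "i = j - 1"
      have i1: "1 \<le> i" and ji: "j = Suc i" using j2 unfolding i_def by auto
      have "\<not> P i" unfolding j_def i_def
        by (rule not_less_Least) (use j2 j_def in simp)
      then have mi: "x i - x 1 + 1 \<le> m" using i1 unfolding P_def by simp
      have d: "x (i+1) - x i \<le> n" "x i < x (i+1)" using H i1 by auto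
      have mj: "m < x (i+1) - x 1 + 1" using Pj ji unfolding P_def by simp
      define q where "q = m - (x i - x 1)"
      have q: "q \<in> {1..n}" using mi mj d xge[OF i1] unfolding q_def by auto
      have "f q i = m" using mi unfolding q_def f_def by simp
      then have "m \<in> A q" unfolding A_def using i1 by (metis atLeast_iff image_eqI)
      then show "m \<in> (\<Union>q\<in>{1..n}. A q)" using q by blast
    qed
  qed
  obtain q where q: "q \<in> {1..n}" "has_index_ap (A q)"
    using assms n cover unfolding stmt3_def by blast
  then obtain a b c where abc: "a \<in> A q" "b \<in> A q" "c \<in> A q" "a < b" "b < c" "a + c = 2*b"
     "rank (A q) a + rank (A q) c = 2 * rank (A q) b"
    unfolding has_index_ap_def by blast
  obtain i where i: "1 \<le> i" "a = f q i" using abc(1) unfolding A_def by auto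
  obtain j where j: "1 \<le> j" "b = f q j" using abc(2) unfolding A_def by auto
  obtain k where k: "1 \<le> k" "c = f q k" using abc(3) unfolding A_def by auto
  have ij: "i < j" using abc(4) i j fsm[of j i q] by (cases "i < j") (auto simp: not_less_iff_gr_or_eq)
  have jk: "j < k" using abc(5) j k fsm[of k j q] by (cases "j < k") (auto simp: not_less_iff_gr_or_eq)
  have ri: "rank (A q) a = i - 1" unfolding A_def i(2) by (rule rank_img) (use fsm i in auto)
  have rj: "rank (A q) b = j - 1" unfolding A_def j(2) by (rule rank_img) (use fsm j in auto)
  have rk: "rank (A q) c = k - 1" unfolding A_def k(2) by (rule rank_img) (use fsm k in auto)
  have "x i + x k = 2 * x j" using abc(6) i j k xge[of i] xge[of j] xge[of k] unfolding f_def by simp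
  moreover have "i + k = 2 * j" using abc(7) ri rj rk i j k by simp
  ultimately show "\<exists>i j k. 1 \<le> i \<and> i < j \<and> j < k \<and> x i + x k = 2 * x j \<and> i + k = 2 * j"
    using i(1) ij jk by blast
qed



lemma block_ap:
  fixes B :: "nat set" and a S T' :: nat
  assumes a: "1 \<le> a" and T': "1 \<le> T'"
    and W: "\<forall>c. a \<le> c \<longrightarrow> c + T' \<le> a + S * T' \<longrightarrow> (\<exists>y. c \<le> y \<and> y < c + T' \<and> y \<in> B)"
    and S: "\<forall>x::nat \<Rightarrow> nat.
     (\<forall>i. 1 \<le> i \<and> i \<le> S \<longrightarrow> 0 < x i) \<and>
     (\<forall>i. 1 \<le> i \<and> i \<le> S - 1 \<longrightarrow> x i < x (i+1) \<and> x (i+1) - x i \<le> T'+1) \<longrightarrow>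
     (\<exists>i j k. 1 \<le> i \<and> i < j \<and> j < k \<and> k \<le> S \<and> x i + x k = 2 * x j \<and> i + k = 2 * j)"
  shows "has_index_ap B"
proof -
  define g where "g = (\<lambda>v. LEAST y. y \<in> B \<and> v < y)"
  define x where "x = (\<lambda>i. (g ^^ i) (a - 1))"
  have xs: "x (Suc i) = g (x i)" for i unfolding x_def by simp
  have step: "x (Suc i) \<in> B \<and> x i < x (Suc i) \<and> x (Suc i) \<le> x i + T' \<and> (\<forall>y\<in>B. x i < y \<longrightarrow> x (Suc i) \<le> y)"
    if hh: "i < S" "a - 1 \<le> x i" "x i \<le> a - 1 + i * T'" for i
  proof -
    have "x i + 1 + T' \<le> a + S * T'"
    proof -
      have "x i + 1 + T' \<le> a + i * T' + T'" using hh a by simp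
      also have "\<dots> = a + (Suc i) * T'" by simp
      also have "\<dots> \<le> a + S * T'" using hh(1) by (intro add_left_mono mult_right_mono) auto
      finally show ?thesis .
    qed
    moreover have "a \<le> x i + 1" using hh(2) a by simp
    ultimately obtain y where y: "x i + 1 \<le> y" "y < x i + 1 + T'" "y \<in> B"
      using W[rule_format, of "x i + 1"] by blast
    have P: "y \<in> B \<and> x i < y" using y by simp
    have L1: "g (x i) \<in> B \<and> x i < g (x i)" unfolding g_def using P by (rule LeastI)
    have L2: "g (x i) \<le> y" unfolding g_def using P by (rule Least_le)
    have L3: "\<forall>z\<in>B. x i < z \<longrightarrow> g (x i) \<le> z" unfolding g_def by (auto intro: Least_le)
    have L4: "g (x i) \<le> x i + T'" using L2 y by linarith
    show ?thesis using L1 L4 L3 unfolding xs by blast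
  qed
  have bnd: "i \<le> S \<longrightarrow> a - 1 \<le> x i \<and> x i \<le> a - 1 + i * T'" for i
  proof (induction i)
    case 0 then show ?case unfolding x_def by simp
  next
    case (Suc i)
    show ?case
    proof
      assume "Suc i \<le> S"
      then have h: "i < S" "a - 1 \<le> x i" "x i \<le> a - 1 + i * T'" using Suc by auto
      then show "a - 1 \<le> x (Suc i) \<and> x (Suc i) \<le> a - 1 + Suc i * T'" using step[OF h] by simp
    qed
  qed
  have st: "x (Suc i) \<in> B \<and> x i < x (Suc i) \<and> x (Suc i) \<le> x i + T' \<and> (\<forall>y\<in>B. x i < y \<longrightarrow> x (Suc i) \<le> y)"
    if "i < S" for i using step[OF that] bnd[of i] that by simp
  have xmono: "x i < x j" if "i < j" "j \<le> S" for i j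
    using that
  proof (induction j)
    case 0 then show ?case by simp
  next
    case (Suc j)
    then have "x j < x (Suc j)" using st[of j] by simp
    then show ?case using Suc by (cases "i = j") auto
  qed
  have rk: "rank B (x i) = rank B (x 1) + (i - 1)" if "1 \<le> i" "i \<le> S" for i
    using that
  proof (induction i rule: dec_induct)
    case base then show ?case by simp
  next
    case (step i)
    have iS: "i < S" using step by simp
    have xiB: "x i \<in> B" using st[of "i - 1"] step(1) iS by (cases i) auto
    have "{y \<in> B. y < x (Suc i)} = insert (x i) {y \<in> B. y < x i}"
      using st[OF iS] xiB by force
    moreover have "finite {y \<in> B. y < x i}" by simp
    ultimately have "rank B (x (Suc i)) = Suc (rank B (x i))" unfolding rank_def by simp
    then show ?case using step iS by simp
  qed
  have c1: "\<forall>i. 1 \<le> i \<and> i \<le> S \<longrightarrow> 0 < x i"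
  proof (intro allI impI)
    fix i assume i: "1 \<le> i \<and> i \<le> S"
    then have "a - 1 \<le> x (i - 1)" "x (i - 1) < x i" using bnd[of "i-1"] st[of "i-1"] by auto
    then show "0 < x i" using a by simp
  qed
  have c2: "\<forall>i. 1 \<le> i \<and> i \<le> S - 1 \<longrightarrow> x i < x (i+1) \<and> x (i+1) - x i \<le> T'+1"
  proof (intro allI impI)
    fix i assume "1 \<le> i \<and> i \<le> S - 1"
    then have "i < S" by arith
    then have "x i < x (Suc i)" "x (Suc i) \<le> x i + T'" using st[of i] by auto
    then show "x i < x (i+1) \<and> x (i+1) - x i \<le> T'+1" by simp
  qed
  obtain i j k where ijk: "1 \<le> i" "i < j" "j < k" "k \<le> S" "x i + x k = 2 * x j" "i + k = 2 * j"
    using S c1 c2 by blast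
  have inB: "x l \<in> B" if "1 \<le> l" "l \<le> S" for l using st[of "l - 1"] that by (cases l) auto
  show ?thesis unfolding has_index_ap_def
  proof (intro exI conjI)
    show "x i \<in> B" "x j \<in> B" "x k \<in> B" using inB ijk by auto
    show "x i < x j" "x j < x k" using xmono ijk by auto
    show "x i + x k = 2 * x j" by fact
    show "rank B (x i) + rank B (x k) = 2 * rank B (x j)" using rk[of i] rk[of j] rk[of k] ijk by simp
  qed
qed


lemma gen:
  assumes "stmt2a"
  shows "\<exists>T. \<forall>(a::nat) (A::nat \<Rightarrow> nat set) (Q::nat set). 1 \<le> a \<longrightarrow> finite Q \<longrightarrow> card Q \<le> t \<longrightarrow> {a..<a+T} \<subseteq> (\<Union>q\<in>Q. A q)
           \<longrightarrow> (\<exists>q\<in>Q. has_index_ap (A q))"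
proof (induction t)
  case 0
  show ?case
  proof (intro exI[of _ 1] allI impI)
    fix a :: nat and A :: "nat \<Rightarrow> nat set" and Q :: "nat set"
    assume "finite Q" "card Q \<le> 0" "{a..<a+1} \<subseteq> (\<Union>q\<in>Q. A q)"
    then show "\<exists>q\<in>Q. has_index_ap (A q)" by auto
  qed
next
  case (Suc t)
  then obtain T0 where T0: "\<forall>(a::nat) (A::nat \<Rightarrow> nat set) (Q::nat set). 1 \<le> a \<longrightarrow> finite Q \<longrightarrow> card Q \<le> t \<longrightarrow> {a..<a+T0} \<subseteq> (\<Union>q\<in>Q. A q)
           \<longrightarrow> (\<exists>q\<in>Q. has_index_ap (A (q::nat)))" by blast
  define T' where "T' = T0 + 1"
  have T'1: "1 \<le> T'" unfolding T'_def by simp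
  obtain S where S: "\<forall>x::nat \<Rightarrow> nat.
     (\<forall>i. 1 \<le> i \<and> i \<le> S \<longrightarrow> 0 < x i) \<and>
     (\<forall>i. 1 \<le> i \<and> i \<le> S - 1 \<longrightarrow> x i < x (i+1) \<and> x (i+1) - x i \<le> T'+1) \<longrightarrow>
     (\<exists>i j k. 1 \<le> i \<and> i < j \<and> j < k \<and> k \<le> S \<and> x i + x k = 2 * x j \<and> i + k = 2 * j)"
  proof -
    have "T' + 1 > 1" using T'1 by simp
    then show ?thesis using assms that unfolding stmt2a_def by blast
  qed
  have "\<forall>(a::nat) (A::nat \<Rightarrow> nat set) (Q::nat set). 1 \<le> a \<longrightarrow> finite Q \<longrightarrow> card Q \<le> Suc t \<longrightarrow> {a..<a+(S*T'+1)} \<subseteq> (\<Union>q\<in>Q. A q)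
           \<longrightarrow> (\<exists>q\<in>Q. has_index_ap (A (q::nat)))"
  proof (intro allI impI)
    fix a :: nat and A :: "nat \<Rightarrow> nat set" and Q :: "nat set"
    assume a: "1 \<le> a" and fQ: "finite Q" and cQ: "card Q \<le> Suc t"
      and cov: "{a..<a+(S*T'+1)} \<subseteq> (\<Union>q\<in>Q. A q)"
    have "a \<in> {a..<a+(S*T'+1)}" by simp
    then have "a \<in> (\<Union>q\<in>Q. A q)" using cov by (rule subsetD[rotated])
    then obtain q0 where q0: "q0 \<in> Q" by blast
    show "\<exists>q\<in>Q. has_index_ap (A q)"
    proof (cases "\<exists>c. a \<le> c \<and> c + T' \<le> a + S * T' \<and> (\<forall>y. c \<le> y \<and> y < c + T' \<longrightarrow> y \<notin> A q0)")
      case True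
      then obtain c where c: "a \<le> c" "c + T' \<le> a + S * T'" "\<forall>y. c \<le> y \<and> y < c + T' \<longrightarrow> y \<notin> A q0"
        by blast
      have "{c..<c+T0} \<subseteq> (\<Union>q\<in>Q - {q0}. A q)"
      proof
        fix y assume y: "y \<in> {c..<c+T0}"
        then have "y \<in> {a..<a+(S*T'+1)}" using c unfolding T'_def by auto
        then obtain q where "q \<in> Q" "y \<in> A q" using cov by blast
        moreover have "y \<notin> A q0" using c(3) y unfolding T'_def by auto
        ultimately show "y \<in> (\<Union>q\<in>Q - {q0}. A q)" by auto
      qed
      moreover have "card (Q - {q0}) \<le> t" using cQ q0 fQ by simp
      moreover have "1 \<le> c" using a c(1) by simp
      moreover have "finite (Q - {q0})" using fQ by simp
      ultimately have "\<exists>q\<in>Q - {q0}. has_index_ap (A q)"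
        using T0[rule_format, of c "Q - {q0}" A] by blast
      then show ?thesis by blast
    next
      case False
      then have W: "\<forall>c. a \<le> c \<longrightarrow> c + T' \<le> a + S * T' \<longrightarrow> (\<exists>y. c \<le> y \<and> y < c + T' \<and> y \<in> A q0)"
        by blast
      have "has_index_ap (A q0)" by (rule block_ap[OF a T'1 W S])
      then show ?thesis using q0 by blast
    qed
  qed
  then show ?case by blast
qed


lemma s2a_s3a: assumes "stmt2a" shows "stmt3a"
  unfolding stmt3a_def
proof (intro allI impI)
  fix t :: nat assume "t > 1"
  obtain T where T: "\<forall>(a::nat) (A::nat \<Rightarrow> nat set) (Q::nat set). 1 \<le> a \<longrightarrow> finite Q \<longrightarrow> card Q \<le> t \<longrightarrow> {a..<a+T} \<subseteq> (\<Union>q\<in>Q. A q)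
           \<longrightarrow> (\<exists>q\<in>Q. has_index_ap (A (q::nat)))" using gen[OF assms] by blast
  show "\<exists>T. \<forall>a\<ge>1. \<forall>A. \<Union> (A ` {1..t}) = {a..<a + T} \<longrightarrow> (\<exists>q\<in>{1..t}. has_index_ap (A q))"
  proof (intro exI[of _ T] allI impI)
    fix a :: nat and A :: "nat \<Rightarrow> nat set" assume "1 \<le> a" "\<Union> (A ` {1..t}) = {a..<a + T}"
    then show "\<exists>q\<in>{1..t}. has_index_ap (A q)" using T[rule_format, of a "{1..t}" A] by simp
  qed
qed


lemma s2a_s3: assumes "stmt2a" shows "stmt3"
  unfolding stmt3_def
proof (intro allI impI)
  fix t :: nat and A :: "nat \<Rightarrow> nat set" assume "t > 1" and cov: "(\<Union>q\<in>{1..t}. A q) = {1..}"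
  obtain T where T: "\<forall>(a::nat) (A::nat \<Rightarrow> nat set) (Q::nat set). 1 \<le> a \<longrightarrow> finite Q \<longrightarrow> card Q \<le> t \<longrightarrow> {a..<a+T} \<subseteq> (\<Union>q\<in>Q. A q)
           \<longrightarrow> (\<exists>q\<in>Q. has_index_ap (A (q::nat)))" using gen[OF assms] by blast
  have "{1..<1+T} \<subseteq> (\<Union>q\<in>{1..t}. A q)" using cov by auto
  then show "\<exists>q\<in>{1..t}. has_index_ap (A q)" using T[rule_format, of 1 "{1..t}" A] by simp
qed


lemma s3a_s3: assumes "stmt3a" shows "stmt3"
  unfolding stmt3_def
proof (intro allI impI)
  fix t :: nat and A :: "nat \<Rightarrow> nat set" assume t: "t > 1" and cov: "(\<Union>q\<in>{1..t}. A q) = {1..}"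
  obtain T where T: "\<forall>a::nat. a \<ge> 1 \<longrightarrow>
     (\<forall>A::nat \<Rightarrow> nat set. (\<Union>q\<in>{1..t}. A q) = {a..<a+T} \<longrightarrow>
        (\<exists>q\<in>{1..t}. has_index_ap (A q)))"
    using assms[unfolded stmt3a_def, rule_format, OF t] by (elim exE) blast
  define A' where "A' = (\<lambda>q. A q \<inter> {..<1+T})"
  have "(\<Union>q\<in>{1..t}. A' q) = (\<Union>q\<in>{1..t}. A q) \<inter> {..<1+T}" unfolding A'_def by blast
  also have "\<dots> = {1..<1+T}" unfolding cov by auto
  finally have cA: "(\<Union>q\<in>{1..t}. A' q) = {1..<1+T}" .
  have "\<exists>q\<in>{1..t}. has_index_ap (A' q)" using T[rule_format, of 1 A'] cA by simp
  then obtain q where q: "q \<in> {1..t}" "has_index_ap (A' q)" by blast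
  have rk: "rank (A' q) v = rank (A q) v" if "v < 1 + T" for v
  proof -
    have "{y \<in> A' q. y < v} = {y \<in> A q. y < v}" using that unfolding A'_def by auto
    then show ?thesis unfolding rank_def by simp
  qed
  from q(2) obtain a b c where abc: "a \<in> A' q" "b \<in> A' q" "c \<in> A' q" "a < b" "b < c" "a + c = 2*b"
     "rank (A' q) a + rank (A' q) c = 2 * rank (A' q) b" unfolding has_index_ap_def by blast
  have lt: "a < 1 + T" "b < 1 + T" "c < 1 + T" using abc(1-3) unfolding A'_def by auto
  have inA: "a \<in> A q" "b \<in> A q" "c \<in> A q" using abc(1-3) unfolding A'_def by auto
  have "rank (A q) a + rank (A q) c = 2 * rank (A q) b" using abc(7) rk lt by simp
  then have "has_index_ap (A q)" unfolding has_index_ap_def using inA abc(4-6) by blast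
  then show "\<exists>q\<in>{1..t}. has_index_ap (A q)" using q(1) by blast
qed

theorem theorem4:
  shows "(stmt1 \<longleftrightarrow> stmt1a) \<and> (stmt1a \<longleftrightarrow> stmt2) \<and> (stmt2 \<longleftrightarrow> stmt2a)
       \<and> (stmt2a \<longleftrightarrow> stmt3) \<and> (stmt3 \<longleftrightarrow> stmt3a)"
proof -
  have e1: "stmt1 = stmt1a" using s1_s1a s1a_s1 by (rule iffI)
  have e2: "stmt1 = stmt2" using s1_s2 s2_s1 by (rule iffI)
  have e3: "stmt1a = stmt2a" using s1a_s2a s2a_s1a by (rule iffI)
  have e4: "stmt2a = stmt3"
  proof
    assume "stmt2a" then show "stmt3" by (rule s2a_s3)
  next
    assume "stmt3" then have "stmt2" by (rule s3_s2)
    then show "stmt2a" using e1 e2 e3 by simp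
  qed
  have e5: "stmt3 = stmt3a"
  proof
    assume "stmt3" then have "stmt2a" using e4 by simp
    then show "stmt3a" by (rule s2a_s3a)
  next
    assume "stmt3a" then show "stmt3" by (rule s3a_s3)
  qed
  show ?thesis using e1 e2 e3 e4 e5 by simp
qed

end
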